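(* Let $N\ge1$, $\Delta w>0$, $\Delta t>0$. For $i=0,\dots,N-1$ let $D_{i+1/2}>0$ and let $\tilde{\mathcal C}^n_{i+1/2}\in\mathbb{R}$ be arbitrary (in applications they are computed from $f^n$). Define $\lambda^n_{i+1/2}=\Delta w\,\tilde{\mathcal C}^n_{i+1/2}/D_{i+1/2}$, $\delta^n_{i+1/2}=\frac{1}{\lambda^n_{i+1/2}}+\frac{1}{1-e^{\lambda^n_{i+1/2}}}$ (with $\delta^n_{i+1/2}=1/2$ if $\lambda^n_{i+1/2}=0$), $$\mathcal F^n_{i+1/2}=\tilde{\mathcal C}^n_{i+1/2}\big[(1-\delta^n_{i+1/2})f^n_{i+1}+\delta^n_{i+1/2}f^n_i\big]+D_{i+1/2}\frac{f^n_{i+1}-f^n_i}{\Delta w},\quad i=0,\dots,N-1,$$ and $\mathcal F^n_{-1/2}=\mathcal F^n_{N+1/2}=0$. Consider the explicit (forward Euler) scheme $$f_i^{n+1}=f_i^n+\Delta t\,\frac{\mathcal F^n_{i+1/2}-\mathcal F^n_{i-1/2}}{\Delta w},\qquad i=0,\dots,N.$$ Let $M=\max_i|\tilde{\mathcal C}^n_{i+1/2}|$ and $D=\max_i D_{i+1/2}$. If $$\Delta t\le\frac{\Delta w^2}{2(M\Delta w+D)},$$ then $f_i^n\ge0$ for all $i$ implies $f_i^{n+1}\ge 0$ for all $i=0,\dots,N$.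
   Context: This is the Chang–Cooper type (SP-CC) discretization of the 1D Fokker–Planck equation $\partial_t f=\partial_w[(\mathcal B[f]+D')f+D\partial_w f]$ on a uniform grid with no-flux boundary conditions; in the paper $\tilde{\mathcal C}^n_{i+1/2}=\frac{D_{i+1/2}}{\Delta w}\int_{w_i}^{w_{i+1}}\frac{\mathcal B[f^n](w)+D'(w)}{D(w)}dw$ (or a quadrature of it), but the claim holds for arbitrary real values. *)

theory Defs
  imports Complex_Main
begin

definition cc_delta :: "real \<Rightarrow> real" where
  "cc_delta lam = (if lam = 0 then 1/2 else 1 / lam + 1 / (1 - exp lam))"

text \<open>Interior flux F_{i+1/2}, for i = 0..N-1. C i and Dh i stand for the values at i+1/2.\<close>
definition cc_flux_int :: "real \<Rightarrow> (nat \<Rightarrow> real) \<Rightarrow> (nat \<Rightarrow> real) \<Rightarrow> (nat \<Rightarrow> real) \<Rightarrow> nat \<Rightarrow> real" where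
  "cc_flux_int dw C Dh f i =
     (let lam = dw * C i / Dh i; del = cc_delta lam in
      C i * ((1 - del) * f (Suc i) + del * f i) + Dh i * (f (Suc i) - f i) / dw)"

text \<open>Shifted flux index: cc_flux N dw C Dh f k = F_{k-1/2}, for k = 0..N+1,
  with the no-flux boundary values F_{-1/2} = F_{N+1/2} = 0.\<close>
definition cc_flux :: "nat \<Rightarrow> real \<Rightarrow> (nat \<Rightarrow> real) \<Rightarrow> (nat \<Rightarrow> real) \<Rightarrow> (nat \<Rightarrow> real) \<Rightarrow> nat \<Rightarrow> real" where
  "cc_flux N dw C Dh f k = (if k = 0 \<or> k \<ge> N + 1 then 0 else cc_flux_int dw C Dh f (k - 1))"

definition cc_step :: "nat \<Rightarrow> real \<Rightarrow> real \<Rightarrow> (nat \<Rightarrow> real) \<Rightarrow> (nat \<Rightarrow> real) \<Rightarrow> (nat \<Rightarrow> real) \<Rightarrow> nat \<Rightarrow> real" where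
  "cc_step N dw dt C Dh f i = f i + dt * (cc_flux N dw C Dh f (Suc i) - cc_flux N dw C Dh f i) / dw"

end

theory Submission imports Defs begin

lemma exp_ge: "1 + x \<le> exp (x::real)" using exp_ge_add_one_self[of x] by linarith

lemma delta_pos_bounds:
  assumes "l > 0" shows "0 \<le> cc_delta l \<and> cc_delta l \<le> 1"
proof -
  have e1: "exp l - 1 > 0" using assms by simp
  have a: "exp l - 1 \<ge> l" using exp_ge[of l] by linarith
  have b: "exp (-l) \<ge> 1 - l" using exp_ge[of "-l"] by simp
  have b': "exp l - 1 \<le> l * exp l"
  proof -
    have "exp (-l) * exp l = 1" by (simp add: exp_minus)
    hence "1 \<ge> (1 - l) * exp l" using b mult_right_mono[OF b, of "exp l"] by simp
    thus ?thesis by (simp add: algebra_simps)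
  qed
  have d: "cc_delta l = 1/l - 1/(exp l - 1)"
    using assms by (simp add: cc_delta_def) (simp add: divide_simps; simp add: algebra_simps)
  have "1/(exp l - 1) \<le> 1/l" using a assms e1 by (simp add: frac_le)
  moreover have "1/l - 1/(exp l - 1) \<le> 1"
    using b' assms e1 by (simp add: divide_simps) (simp add: algebra_simps)
  ultimately show ?thesis using d by simp
qed

lemma delta_sym: "l \<noteq> 0 \<Longrightarrow> cc_delta l = 1 - cc_delta (-l)"
proof -
  assume l: "l \<noteq> 0"
  have "1 - exp l \<noteq> 0" "1 - exp (-l) \<noteq> 0" using l by auto
  moreover have "exp (-l) = 1 / exp l" by (simp add: exp_minus field_simps)
  ultimately show ?thesis using l unfolding cc_delta_def
    by (simp add: divide_simps) (simp add: algebra_simps)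
qed

lemma delta_bounds: "0 \<le> cc_delta l \<and> cc_delta l \<le> 1"
proof -
  consider "l = 0" | "l > 0" | "l < 0" by linarith
  thus ?thesis
  proof cases
    case 1 thus ?thesis by (simp add: cc_delta_def)
  next
    case 2 thus ?thesis by (rule delta_pos_bounds)
  next
    case 3 thus ?thesis using delta_sym[of l] delta_pos_bounds[of "-l"] by auto
  qed
qed

lemma delta_p1: "0 \<le> 1 - l * cc_delta l"
proof (cases "l = 0")
  case True thus ?thesis by (simp add: cc_delta_def)
next
  case False
  have ne: "1 - exp l \<noteq> 0" using False by auto
  have eq: "1 - l * cc_delta l = l / (exp l - 1)"
    using False ne unfolding cc_delta_def by (simp add: divide_simps) (simp add: algebra_simps)
  have "0 \<le> l / (exp l - 1)"
  proof (cases "l > 0")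
    case True thus ?thesis by simp
  next
    case f: False
    hence "l < 0" using False by simp
    hence "exp l - 1 < 0" by simp
    thus ?thesis using \<open>l<0\<close> by (simp add: divide_nonpos_neg)
  qed
  thus ?thesis using eq by simp
qed

lemma delta_p2: "0 \<le> 1 + l * (1 - cc_delta l)"
proof (cases "l = 0")
  case True thus ?thesis by (simp add: cc_delta_def)
next
  case False
  have ne: "1 - exp l \<noteq> 0" "exp l - 1 \<noteq> 0" using False by auto
  have eq: "1 + l * (1 - cc_delta l) = l * exp l / (exp l - 1)"
    using False ne unfolding cc_delta_def by (simp add: divide_simps) (simp add: algebra_simps)
  have "0 \<le> l * exp l / (exp l - 1)"
  proof (cases "l > 0")
    case True thus ?thesis by simp
  next
    case f: False
    hence "l < 0" using False by simp
    hence "exp l - 1 < 0" "l * exp l < 0" by (simp_all add: mult_neg_pos)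
    thus ?thesis by (simp add: divide_nonpos_neg)
  qed
  thus ?thesis using eq by simp
qed

definition ccA where "ccA dw C Dh i = C i * (1 - cc_delta (dw * C i / Dh i)) + Dh i / dw"
definition ccB where "ccB dw C Dh i = Dh i / dw - C i * cc_delta (dw * C i / Dh i)"

lemma flux_form: "cc_flux_int dw C Dh f i = ccA dw C Dh i * f (Suc i) - ccB dw C Dh i * f i"
  unfolding cc_flux_int_def ccA_def ccB_def Let_def by (simp add: algebra_simps diff_divide_distrib)

lemma AB_bounds:
  assumes "Dh i > 0" "dw > 0"
  shows "0 \<le> ccA dw C Dh i \<and> ccA dw C Dh i \<le> \<bar>C i\<bar> + Dh i / dw
       \<and> 0 \<le> ccB dw C Dh i \<and> ccB dw C Dh i \<le> \<bar>C i\<bar> + Dh i / dw"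
proof -
  define l where "l = dw * C i / Dh i"
  define d where "d = cc_delta l"
  have ci: "C i = Dh i / dw * l" using assms unfolding l_def by simp
  have db: "0 \<le> d" "d \<le> 1" using delta_bounds[of l] d_def by auto
  have p1: "0 \<le> 1 - l * d" using delta_p1[of l] d_def by simp
  have p2: "0 \<le> 1 + l * (1 - d)" using delta_p2[of l] d_def by simp
  have q: "0 < Dh i / dw" using assms by simp
  have A: "ccA dw C Dh i = Dh i / dw * (1 + l * (1 - d))"
    unfolding ccA_def l_def[symmetric] d_def[symmetric] ci by (simp add: d_def algebra_simps add_divide_distrib)
  have B: "ccB dw C Dh i = Dh i / dw * (1 - l * d)"
    unfolding ccB_def l_def[symmetric] d_def[symmetric] ci by (simp add: d_def algebra_simps)
  have "\<bar>C i * (1 - d)\<bar> \<le> \<bar>C i\<bar>" using db by (simp add: abs_mult mult_left_le)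
  moreover have "\<bar>C i * d\<bar> \<le> \<bar>C i\<bar>" using db by (simp add: abs_mult mult_left_le)
  moreover have "0 \<le> ccA dw C Dh i" unfolding A using p2 q by (simp only: zero_le_mult_iff) simp
  moreover have "0 \<le> ccB dw C Dh i" unfolding B using p1 q by (simp only: zero_le_mult_iff) simp
  moreover have "ccA dw C Dh i = C i * (1 - d) + Dh i / dw" unfolding ccA_def d_def l_def ..
  moreover have "ccB dw C Dh i = Dh i / dw - C i * d" unfolding ccB_def d_def l_def ..
  ultimately show ?thesis by (simp add: abs_le_iff)
qed

theorem mainTheorem3:
  fixes N :: nat and dw dt :: real and C Dh f :: "nat \<Rightarrow> real"
  assumes "N \<ge> 1" and "dw > 0" and "dt > 0"
    and "\<And>i. i < N \<Longrightarrow> Dh i > 0"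
    and "dt \<le> dw ^ 2 / (2 * (Max ((\<lambda>i. \<bar>C i\<bar>) ` {..<N}) * dw + Max (Dh ` {..<N})))"
    and "\<And>i. i \<le> N \<Longrightarrow> f i \<ge> 0"
  shows "\<forall>i \<le> N. cc_step N dw dt C Dh f i \<ge> 0"
proof (intro allI impI)
  fix i assume iN: "i \<le> N"
  define Mc where "Mc = Max ((\<lambda>i. \<bar>C i\<bar>) ` {..<N})"
  define Md where "Md = Max (Dh ` {..<N})"
  define K where "K = Mc + Md / dw"
  have ne: "{..<N} \<noteq> {}" using assms(1) lessThan_iff[of 0 N] by (metis empty_iff less_le_trans zero_less_one)
  have bnd: "\<And>j. j < N \<Longrightarrow> \<bar>C j\<bar> + Dh j / dw \<le> K"
  proof -
    fix j assume j: "j < N"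
    have "\<bar>C j\<bar> \<le> Mc" unfolding Mc_def using j by (intro Max_ge) auto
    moreover have "Dh j \<le> Md" unfolding Md_def using j by (intro Max_ge) auto
    hence "Dh j / dw \<le> Md / dw" using assms(2) by (simp add: divide_right_mono)
    ultimately show "\<bar>C j\<bar> + Dh j / dw \<le> K" unfolding K_def by simp
  qed
  have Md0: "Md > 0" using assms(4)[of 0] assms(1) unfolding Md_def
    by (metis Max_ge finite_imageI finite_lessThan image_eqI lessThan_iff less_le_trans
        less_numeral_extra(1) less_one not_less)
  have Mc0: "Mc \<ge> 0" unfolding Mc_def using ne
    by (metis Max_ge abs_ge_zero finite_imageI finite_lessThan image_eqI order_trans ex_in_conv)
  have den: "0 < Mc * dw + Md" using Md0 Mc0 assms(2) by (simp add: add_nonneg_pos)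
  have dtK: "dt / dw * (2 * K) \<le> 1"
  proof -
    have "dt * (2 * (Mc * dw + Md)) \<le> dw ^ 2"
      using assms(5) den unfolding Mc_def[symmetric] Md_def[symmetric] by (simp add: le_divide_eq)
    moreover have "dt / dw * (2 * K) = dt * (2 * (Mc * dw + Md)) / dw ^ 2"
      unfolding K_def using assms(2) by (simp add: field_simps power2_eq_square)
    ultimately show ?thesis using assms(2) by simp
  qed
  define p where "p = (if i < N then ccB dw C Dh i else 0)"
  define q where "q = (if 0 < i then ccA dw C Dh (i - 1) else 0)"
  define r where "r = (if i < N then ccA dw C Dh i * f (Suc i) else 0)"
  define s where "s = (if 0 < i then ccB dw C Dh (i - 1) * f (i - 1) else 0)"
  have AB: "\<And>j. j < N \<Longrightarrow> 0 \<le> ccA dw C Dh j \<and> ccA dw C Dh j \<le> K \<and> 0 \<le> ccB dw C Dh j \<and> ccB dw C Dh j \<le> K"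
    using AB_bounds assms(2,4) bnd by (meson order_trans)
  have fp: "cc_flux N dw C Dh f (Suc i) = r - p * f i"
    unfolding cc_flux_def r_def p_def by (auto simp: flux_form)
  have fm: "cc_flux N dw C Dh f i = q * f i - s"
  proof (cases "i = 0")
    case True thus ?thesis unfolding cc_flux_def q_def s_def by simp
  next
    case False
    then obtain k where k: "i = Suc k" by (cases i) auto
    thus ?thesis unfolding cc_flux_def q_def s_def using iN by (simp add: flux_form)
  qed
  have pK: "0 \<le> p \<and> p \<le> K" unfolding p_def using AB[of i] AB[of 0] assms(1)
    by (cases "i < N") auto
  have qK: "0 \<le> q \<and> q \<le> K" unfolding q_def using AB[of "i - 1"] AB[of 0] assms(1) iN
    by (cases "0 < i") auto
  have r0: "0 \<le> r" unfolding r_def using AB[of i] assms(6)[of "Suc i"] by auto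
  have s0: "0 \<le> s" unfolding s_def using AB[of "i - 1"] assms(6)[of "i - 1"] iN by auto
  have eq: "cc_step N dw dt C Dh f i = f i * (1 - dt / dw * (p + q)) + dt / dw * (r + s)"
    unfolding cc_step_def fp fm using assms(2) by (simp add: field_simps)
  have "dt / dw * (p + q) \<le> dt / dw * (2 * K)"
    using pK qK assms(2,3) by (intro mult_left_mono) auto
  hence c1: "0 \<le> 1 - dt / dw * (p + q)" using dtK by simp
  have "0 \<le> dt / dw * (r + s)" using r0 s0 assms(2,3) by simp
  moreover have "0 \<le> f i * (1 - dt / dw * (p + q))" using c1 assms(6)[OF iN] by simp
  ultimately show "0 \<le> cc_step N dw dt C Dh f i" using eq by simp
qed

end
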